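(* (i) If $1\le q<p<\infty$, then the pair $(\ell_p,\ell_q)$ has the sBPBp. (ii) If $1<p\le q<\infty$, then the pair $(\ell_p,\ell_q)$ fails the sBPBp.
   Context: Scalars $\mathbb{K}=\mathbb{R}$ or $\mathbb{C}$; $\ell_p$ is the usual sequence space. $S_X$ is the unit sphere of $X$, $\mathcal{L}(X,Y)$ the bounded linear operators. A pair $(X,Y)$ has the strong Bishop–Phelps–Bollobás property (sBPBp) if for every $\varepsilon>0$ and every $T\in\mathcal{L}(X,Y)$ with $\|T\|=1$ there exists $\eta=\eta(\varepsilon,T)>0$ such that whenever $x_0\in S_X$ satisfies $\|T(x_0)\|>1-\eta$, there exists $x_1\in S_X$ with $\|T(x_1)\|=1$ and $\|x_1-x_0\|<\varepsilon$. *)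

theory Defs
  imports "HOL-Analysis.Analysis"
begin

definition lp :: "real \<Rightarrow> (nat \<Rightarrow> 'a::real_normed_field) set" where
  "lp p = {x. summable (\<lambda>n. norm (x n) powr p)}"

definition lp_norm :: "real \<Rightarrow> (nat \<Rightarrow> 'a::real_normed_field) \<Rightarrow> real" where
  "lp_norm p x = (\<Sum>n. norm (x n) powr p) powr (1 / p)"

definition bounded_op :: "real \<Rightarrow> real \<Rightarrow> ((nat \<Rightarrow> 'a::real_normed_field) \<Rightarrow> (nat \<Rightarrow> 'a)) \<Rightarrow> bool" where
  "bounded_op p q T \<longleftrightarrow>
     (\<forall>x\<in>lp p. T x \<in> lp q) \<and>
     (\<forall>x\<in>lp p. \<forall>y\<in>lp p. T (\<lambda>n. x n + y n) = (\<lambda>n. T x n + T y n)) \<and>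
     (\<forall>c. \<forall>x\<in>lp p. T (\<lambda>n. c * x n) = (\<lambda>n. c * T x n)) \<and>
     (\<exists>C. \<forall>x\<in>lp p. lp_norm q (T x) \<le> C * lp_norm p x)"

definition op_norm :: "real \<Rightarrow> real \<Rightarrow> ((nat \<Rightarrow> 'a::real_normed_field) \<Rightarrow> (nat \<Rightarrow> 'a)) \<Rightarrow> real" where
  "op_norm p q T = Sup {lp_norm q (T x) | x. x \<in> lp p \<and> lp_norm p x = 1}"

definition sBPBp :: "'a::real_normed_field itself \<Rightarrow> real \<Rightarrow> real \<Rightarrow> bool" where
  "sBPBp (_ :: 'a itself) p q \<longleftrightarrow>
     (\<forall>\<epsilon>>0. \<forall>T :: (nat \<Rightarrow> 'a) \<Rightarrow> (nat \<Rightarrow> 'a).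
        bounded_op p q T \<and> op_norm p q T = 1 \<longrightarrow>
        (\<exists>\<eta>>0. \<forall>x0\<in>lp p. lp_norm p x0 = 1 \<and> lp_norm q (T x0) > 1 - \<eta> \<longrightarrow>
           (\<exists>x1\<in>lp p. lp_norm p x1 = 1 \<and> lp_norm q (T x1) = 1 \<and>
              lp_norm p (\<lambda>n. x1 n - x0 n) < \<epsilon>)))"

end

theory Submission
  imports Defs "HOL-Library.Diagonal_Subsequence"
begin


lemma powr_le_self_base:
  fixes u p :: real assumes "0 \<le> u" "u \<le> 1" "p \<ge> 1" shows "u powr p \<le> u"
proof (cases "u = 0")
  case True then show ?thesis by simp
next
  case False
  then have "u powr p \<le> u powr 1" using assms by (intro powr_mono') auto
  then show ?thesis using False assms by simp
qed

lemma powr_convex_pt: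
  fixes a b t p :: real
  assumes "p \<ge> 1" "a \<ge> 0" "b \<ge> 0" "0 \<le> t" "t \<le> 1"
  shows "(t*a + (1-t)*b) powr p \<le> t * a powr p + (1-t) * b powr p"
proof -
  consider "a = 0" | "b = 0" | "a > 0" "b > 0" using assms by linarith
  then show ?thesis
  proof cases
    case 1
    have "((1-t)*b) powr p = (1-t) powr p * b powr p" using assms by (simp add: powr_mult)
    also have "\<dots> \<le> (1-t) * b powr p" using assms by (intro mult_right_mono powr_le_self_base) auto
    finally show ?thesis using 1 assms by simp
  next
    case 2
    have "(t*a) powr p = t powr p * a powr p" using assms by (simp add: powr_mult)
    also have "\<dots> \<le> t * a powr p" using assms by (intro mult_right_mono powr_le_self_base) auto
    finally show ?thesis using 2 assms by simp
  next
    case 3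
    have "(\<lambda>x. x powr p) ((1 - t) *\<^sub>R b + t *\<^sub>R a) \<le> (1 - t) * b powr p + t * a powr p"
      using convex_onD[OF powr_convex[OF assms(1)], of t b a] 3 assms by auto
    then show ?thesis by (simp add: algebra_simps)
  qed
qed

lemma powr_le_iff_base:
  fixes x y p :: real assumes "p > 0" "x \<ge> 0" "y \<ge> 0"
  shows "x powr p \<le> y powr p \<longleftrightarrow> x \<le> y"
  using assms powr_mono2[of p x y] powr_less_mono2[of p y x] by (auto simp: not_le[symmetric])

lemma powr_less_iff_base:
  fixes x y p :: real assumes "p > 0" "x \<ge> 0" "y \<ge> 0"
  shows "x powr p < y powr p \<longleftrightarrow> x < y"
  using powr_le_iff_base[OF assms(1,3,2)] by (simp add: not_le[symmetric])

definition S :: "real \<Rightarrow> (nat \<Rightarrow> 'a::real_normed_field) \<Rightarrow> real" where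
  "S p x = (\<Sum>n. norm (x n) powr p)"

lemma lp_norm_S: "lp_norm p x = S p x powr (1/p)"
  by (simp add: lp_norm_def S_def)

lemma lp_iff: "x \<in> lp p \<longleftrightarrow> summable (\<lambda>n. norm (x n) powr p)"
  by (simp add: lp_def)

lemma S_nonneg: "x \<in> lp p \<Longrightarrow> S p x \<ge> 0"
  unfolding S_def lp_iff by (auto intro: suminf_nonneg)

lemma S_eq_0: "x \<in> lp p \<Longrightarrow> S p x = 0 \<Longrightarrow> x = (\<lambda>n. 0)"
  unfolding S_def lp_iff using suminf_eq_zero_iff[of "\<lambda>n. norm (x n) powr p"] by auto

lemma lp_norm_nonneg: "lp_norm p x \<ge> 0"
  by (simp add: lp_norm_def)

lemma lp_norm_pow: "x \<in> lp p \<Longrightarrow> p > 0 \<Longrightarrow> lp_norm p x powr p = S p x"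
  by (simp add: lp_norm_S powr_powr S_nonneg)

lemma S_le_iff: "x \<in> lp p \<Longrightarrow> p > 0 \<Longrightarrow> c \<ge> 0 \<Longrightarrow> S p x \<le> c powr p \<longleftrightarrow> lp_norm p x \<le> c"
proof -
  assume a: "x \<in> lp p" "p > 0" "c \<ge> 0"
  have "S p x = lp_norm p x powr p" using lp_norm_pow[OF a(1,2)] by simp
  then show ?thesis using powr_le_iff_base[OF a(2) lp_norm_nonneg a(3)] by simp
qed

lemma lp_norm_eq_0: "x \<in> lp p \<Longrightarrow> p > 0 \<Longrightarrow> lp_norm p x = 0 \<Longrightarrow> x = (\<lambda>n. 0)"
proof -
  assume a: "x \<in> lp p" "p > 0" "lp_norm p x = 0"
  have "S p x = lp_norm p x powr p" using lp_norm_pow[OF a(1,2)] by simp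
  then have "S p x = 0" using a(3) by simp
  then show ?thesis using S_eq_0[OF a(1)] by simp
qed

lemma lp_zero: "(\<lambda>n. 0) \<in> lp p"
  by (simp add: lp_iff)

lemma lp_norm_zero: "lp_norm p (\<lambda>n. 0::'a::real_normed_field) = 0"
  by (simp add: lp_norm_S S_def)

lemma pow_add_le:
  fixes a b :: "'a::real_normed_vector"
  assumes "p \<ge> 0"
  shows "norm (a+b) powr p \<le> 2 powr p * (norm a powr p + norm b powr p)"
proof -
  have "norm (a+b) \<le> 2 * max (norm a) (norm b)"
    by (smt (verit) norm_triangle_ineq)
  then have "norm (a+b) powr p \<le> (2 * max (norm a) (norm b)) powr p"
    using assms by (intro powr_mono2) auto
  also have "\<dots> = 2 powr p * max (norm a) (norm b) powr p" by (simp add: powr_mult)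
  also have "\<dots> \<le> 2 powr p * (norm a powr p + norm b powr p)"
    by (intro mult_left_mono) (auto simp: max_def)
  finally show ?thesis .
qed

lemma lp_add: "x \<in> lp p \<Longrightarrow> y \<in> lp p \<Longrightarrow> p \<ge> 0 \<Longrightarrow> (\<lambda>n. x n + y n) \<in> lp p"
proof -
  assume a: "x \<in> lp p" "y \<in> lp p" "p \<ge> 0"
  have "summable (\<lambda>n. 2 powr p * (norm (x n) powr p + norm (y n) powr p))"
    using a unfolding lp_iff by (intro summable_mult summable_add) auto
  moreover have "\<forall>n. norm (norm (x n + y n) powr p) \<le> 2 powr p * (norm (x n) powr p + norm (y n) powr p)"
    by (intro allI) (simp add: pow_add_le[OF a(3)])
  ultimately show ?thesis unfolding lp_iff
    using summable_comparison_test'[of "\<lambda>n. 2 powr p * (norm (x n) powr p + norm (y n) powr p)" 0 "\<lambda>n. norm (x n + y n) powr p"]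
    by blast
qed

lemma S_scale: "x \<in> lp p \<Longrightarrow> S p (\<lambda>n. c * x n) = norm c powr p * S p x"
proof -
  assume x: "x \<in> lp p"
  have "S p (\<lambda>n. c * x n) = (\<Sum>n. norm c powr p * norm (x n) powr p)"
    unfolding S_def by (simp only: norm_mult powr_mult)
  also have "\<dots> = norm c powr p * S p x"
    unfolding S_def using x by (simp only: lp_iff suminf_mult)
  finally show ?thesis .
qed

lemma lp_scale: "x \<in> lp p \<Longrightarrow> (\<lambda>n. c * x n) \<in> lp p"
  unfolding lp_iff by (simp add: norm_mult powr_mult)

lemma lp_uminus: "x \<in> lp p \<Longrightarrow> (\<lambda>n. - x n) \<in> lp p"
  unfolding lp_iff by simp

lemma lp_diff: "x \<in> lp p \<Longrightarrow> y \<in> lp p \<Longrightarrow> p \<ge> 0 \<Longrightarrow> (\<lambda>n. x n - y n) \<in> lp p"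
proof -
  assume a: "x \<in> lp p" "y \<in> lp p" "p \<ge> 0"
  have "(\<lambda>n. x n + - y n) \<in> lp p" by (rule lp_add[OF a(1) lp_uminus[OF a(2)] a(3)])
  then show ?thesis by simp
qed

lemma lp_norm_scale: "x \<in> lp p \<Longrightarrow> p > 0 \<Longrightarrow> lp_norm p (\<lambda>n. c * x n) = norm c * lp_norm p x"
proof -
  assume a: "x \<in> lp p" "p > 0"
  have "lp_norm p (\<lambda>n. c * x n) = (norm c powr p * S p x) powr (1/p)"
    by (simp only: lp_norm_S S_scale[OF a(1)])
  also have "\<dots> = (norm c powr p) powr (1/p) * S p x powr (1/p)" by (rule powr_mult)
  also have "(norm c powr p) powr (1/p) = norm c" using a(2) by (simp add: powr_powr)
  finally show ?thesis by (simp add: lp_norm_S)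
qed

lemma lp_norm_uminus: "lp_norm p (\<lambda>n. - x n) = lp_norm p x"
  by (simp add: lp_norm_def)

lemma lp_norm_commute: "lp_norm p (\<lambda>n. x n - y n) = lp_norm p (\<lambda>n. y n - x n)"
  by (simp add: lp_norm_def norm_minus_commute)

lemma coord_le: "x \<in> lp p \<Longrightarrow> p > 0 \<Longrightarrow> norm (x m) \<le> lp_norm p x"
proof -
  assume x: "x \<in> lp p" and p: "p > 0"
  have "sum (\<lambda>n. norm (x n) powr p) {m} \<le> S p x"
    unfolding S_def using x by (intro sum_le_suminf) (auto simp: lp_iff)
  then have "norm (x m) powr p \<le> lp_norm p x powr p" using lp_norm_pow[OF x p] by simp
  then show ?thesis using p by (simp add: lp_norm_nonneg powr_le_iff_base)
qed



lemma minkowski: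
  assumes x: "x \<in> lp p" and y: "y \<in> lp p" and p: "p \<ge> 1"
  shows "lp_norm p (\<lambda>n. x n + y n) \<le> lp_norm p x + lp_norm p y"
proof -
  define A where "A = lp_norm p x"
  define B where "B = lp_norm p y"
  have A0: "A \<ge> 0" "B \<ge> 0" by (auto simp: A_def B_def lp_norm_nonneg)
  show ?thesis
  proof (cases "A = 0 \<or> B = 0")
    case True
    then show ?thesis
    proof
      assume "A = 0" then have "x = (\<lambda>n. 0)" using lp_norm_eq_0[OF x] p by (simp add: A_def)
      then show ?thesis by (simp add: lp_norm_zero)
    next
      assume "B = 0" then have "y = (\<lambda>n. 0)" using lp_norm_eq_0[OF y] p by (simp add: B_def)
      then show ?thesis by (simp add: lp_norm_zero)
    qed
  next
    case False
    then have Ap: "A > 0" "B > 0" using A0 by auto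
    define t where "t = A / (A+B)"
    have t: "0 \<le> t" "t \<le> 1" "1 - t = B/(A+B)" using Ap by (auto simp: t_def field_simps)
    have xy: "(\<lambda>n. x n + y n) \<in> lp p" using lp_add[OF x y] p by auto
    have pt: "norm (x n + y n) powr p / (A+B) powr p
       \<le> t * (norm (x n) powr p / A powr p) + (1-t) * (norm (y n) powr p / B powr p)" for n
    proof -
      have e: "t * (norm (x n)/A) + (1-t) * (norm (y n)/B) = (norm (x n) + norm (y n)) / (A+B)"
      proof -
        have e1: "t * (norm (x n)/A) = norm (x n)/(A+B)" using Ap by (simp add: t_def)
        have e2: "(1-t) * (norm (y n)/B) = norm (y n)/(A+B)" using Ap by (simp add: t(3))
        show ?thesis unfolding e1 e2 by (simp add: add_divide_distrib)
      qed
      have "norm (x n + y n) / (A+B) \<le> (norm (x n) + norm (y n)) / (A+B)"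
        using Ap norm_triangle_ineq[of "x n" "y n"] by (intro divide_right_mono) auto
      then have "norm (x n + y n) / (A+B) \<le> t * (norm (x n)/A) + (1-t) * (norm (y n)/B)"
        using e by simp
      then have "(norm (x n + y n) / (A+B)) powr p \<le> (t * (norm (x n)/A) + (1-t) * (norm (y n)/B)) powr p"
        using p Ap by (intro powr_mono2) auto
      also have "\<dots> \<le> t * (norm (x n)/A) powr p + (1-t) * (norm (y n)/B) powr p"
        using Ap t p by (intro powr_convex_pt) auto
      finally show ?thesis by (simp add: powr_divide)
    qed
    have p0: "p > 0" using p by simp
    have SA: "S p x = A powr p" "S p y = B powr p"
      by (simp_all add: A_def B_def lp_norm_pow[OF x p0] lp_norm_pow[OF y p0])
    have "S p (\<lambda>n. x n + y n) / (A+B) powr p = (\<Sum>n. norm (x n + y n) powr p / (A+B) powr p)"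
      unfolding S_def using xy by (simp add: lp_iff suminf_divide)
    also have "\<dots> \<le> (\<Sum>n. t * (norm (x n) powr p / A powr p) + (1-t) * (norm (y n) powr p / B powr p))"
      using x y xy by (intro suminf_le pt) (auto simp: lp_iff intro!: summable_add summable_mult summable_divide)
    also have "\<dots> = t * (S p x / A powr p) + (1-t) * (S p y / B powr p)"
      using x y unfolding S_def lp_iff
      by (subst suminf_add[symmetric]) (auto intro!: summable_mult summable_divide simp: suminf_mult suminf_divide)
    also have "\<dots> = 1" using SA Ap by simp
    finally have "S p (\<lambda>n. x n + y n) \<le> (A+B) powr p" using Ap by (simp add: field_simps)
    then show ?thesis using S_le_iff[OF xy] p Ap by (simp add: A_def B_def)
  qed
qed


lemma diag_subseq:
  fixes X :: "nat \<Rightarrow> nat \<Rightarrow> 'a::{heine_borel,real_normed_vector}"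
  assumes bnd: "\<And>k n. norm (X k n) \<le> B"
  shows "\<exists>r l. strict_mono r \<and> (\<forall>n. (\<lambda>k. X (r k) n) \<longlonglongrightarrow> l n)"
proof -
  interpret subseqs "\<lambda>n s. convergent (\<lambda>k. X (s k) n)"
  proof
    fix n and s :: "nat \<Rightarrow> nat"
    assume "strict_mono s"
    have "bounded (range (\<lambda>k. X (s k) n))"
      using bnd by (auto simp: bounded_iff)
    then obtain l r where "strict_mono (r::nat\<Rightarrow>nat)" "((\<lambda>k. X (s k) n) \<circ> r) \<longlonglongrightarrow> l"
      using bounded_imp_convergent_subsequence by blast
    then show "\<exists>r'. strict_mono r' \<and> convergent (\<lambda>k. X ((s \<circ> r') k) n)"
      by (auto simp: convergent_def o_def)
  qed
  have "convergent (\<lambda>k. X ((diagseq \<circ> (+) (Suc n)) k) n)" for n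
  proof (rule diagseq_holds)
    fix r s n assume "strict_mono (r::nat\<Rightarrow>nat)" "convergent (\<lambda>k. X (s k) n)"
    then show "convergent (\<lambda>k. X ((s \<circ> r) k) n)"
      using LIMSEQ_subseq_LIMSEQ[of "\<lambda>k. X (s k) n" _ r] by (auto simp: convergent_def o_def)
  qed
  then have "convergent (\<lambda>k. X (diagseq k) n)" for n
  proof -
    assume h: "\<And>n. convergent (\<lambda>k. X ((diagseq \<circ> (+) (Suc n)) k) n)"
    obtain L where L: "(\<lambda>k. X ((diagseq \<circ> (+) (Suc n)) k) n) \<longlonglongrightarrow> L"
      using h[of n] by (auto simp: convergent_def)
    have e: "(\<lambda>k. X ((diagseq \<circ> (+) (Suc n)) k) n) = (\<lambda>k. X (diagseq (k + Suc n)) n)"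
      by (rule ext) (simp only: o_def add.commute)
    show ?thesis using LIMSEQ_offset[of "\<lambda>k. X (diagseq k) n" "Suc n" L] L e
      by (auto simp: convergent_def)
  qed
  then have "\<forall>n. \<exists>L. (\<lambda>k. X (diagseq k) n) \<longlonglongrightarrow> L" by (simp add: convergent_def)
  then obtain l where "\<forall>n. (\<lambda>k. X (diagseq k) n) \<longlonglongrightarrow> l n" by metis
  then show ?thesis using subseq_diagseq by blast
qed

locale opT =
  fixes p q :: real and T :: "(nat \<Rightarrow> 'a::real_normed_field) \<Rightarrow> (nat \<Rightarrow> 'a)"
  assumes bo: "bounded_op p q T" and on: "op_norm p q T = 1" and p1: "p \<ge> 1" and q1: "q \<ge> 1"
begin

lemma p0: "p > 0" and q0: "q > 0" using p1 q1 by auto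

lemma T_lp: "x \<in> lp p \<Longrightarrow> T x \<in> lp q"
  using bo by (simp add: bounded_op_def)

lemma T_add: "x \<in> lp p \<Longrightarrow> y \<in> lp p \<Longrightarrow> T (\<lambda>n. x n + y n) = (\<lambda>n. T x n + T y n)"
  using bo by (simp add: bounded_op_def)

lemma T_scale: "x \<in> lp p \<Longrightarrow> T (\<lambda>n. c * x n) = (\<lambda>n. c * T x n)"
  using bo by (simp add: bounded_op_def)

lemma T_zero: "T (\<lambda>n. 0) = (\<lambda>n. 0)"
  using T_scale[OF lp_zero, of 0] by simp

lemma T_diff: "x \<in> lp p \<Longrightarrow> y \<in> lp p \<Longrightarrow> T (\<lambda>n. x n - y n) = (\<lambda>n. T x n - T y n)"
proof -
  assume x: "x \<in> lp p" and y: "y \<in> lp p"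
  have "T (\<lambda>n. x n + (-1) * y n) = (\<lambda>n. T x n + T (\<lambda>n. (-1) * y n) n)"
    using T_add[OF x lp_scale[OF y]] .
  also have "T (\<lambda>n. (-1) * y n) = (\<lambda>n. (-1) * T y n)" using T_scale[OF y] .
  finally show ?thesis by simp
qed

lemma lp_sum: "finite I \<Longrightarrow> (\<And>i. i \<in> I \<Longrightarrow> f i \<in> lp r) \<Longrightarrow> r \<ge> 0 \<Longrightarrow> (\<lambda>n. \<Sum>i\<in>I. f i n) \<in> lp r"
proof (induction I rule: finite_induct)
  case empty then show ?case by (simp add: lp_zero)
next
  case (insert a F)
  then show ?case using lp_add[of "f a" r "\<lambda>n. \<Sum>i\<in>F. f i n"] by simp
qed

lemma T_sum: "finite I \<Longrightarrow> (\<And>i. i \<in> I \<Longrightarrow> f i \<in> lp p) \<Longrightarrow> T (\<lambda>n. \<Sum>i\<in>I. f i n) = (\<lambda>n. \<Sum>i\<in>I. T (f i) n)"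
proof (induction I rule: finite_induct)
  case empty then show ?case by (simp add: T_zero)
next
  case (insert a F)
  have "(\<lambda>n. \<Sum>i\<in>F. f i n) \<in> lp p" using insert p0 by (intro lp_sum) auto
  then have "T (\<lambda>n. f a n + (\<Sum>i\<in>F. f i n)) = (\<lambda>n. T (f a) n + T (\<lambda>n. \<Sum>i\<in>F. f i n) n)"
    using insert by (intro T_add) auto
  then show ?case using insert by simp
qed

lemma bdd: "bdd_above {lp_norm q (T x) | x. x \<in> lp p \<and> lp_norm p x = 1}"
proof -
  obtain C where C: "\<forall>x\<in>lp p. lp_norm q (T x) \<le> C * lp_norm p x" using bo by (auto simp: bounded_op_def)
  then show ?thesis unfolding bdd_above_def by (rule_tac x=C in exI) auto
qed

lemma T_unit: "x \<in> lp p \<Longrightarrow> lp_norm p x = 1 \<Longrightarrow> lp_norm q (T x) \<le> 1"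
  using cSup_upper[OF _ bdd, of "lp_norm q (T x)"] on by (auto simp: op_norm_def)

lemma T_bound: "x \<in> lp p \<Longrightarrow> lp_norm q (T x) \<le> lp_norm p x"
proof -
  assume x: "x \<in> lp p"
  show ?thesis
  proof (cases "lp_norm p x = 0")
    case True
    then have "x = (\<lambda>n. 0)" using lp_norm_eq_0[OF x p0] by simp
    then show ?thesis by (simp add: T_zero lp_norm_zero)
  next
    case False
    define r where "r = lp_norm p x"
    have r0: "r > 0" using False lp_norm_nonneg[of p x] by (simp add: r_def)
    define u where "u = (\<lambda>n. of_real (1/r) * x n)"
    have u: "u \<in> lp p" unfolding u_def by (rule lp_scale[OF x])
    have "lp_norm p u = norm (of_real (1/r) :: 'a) * lp_norm p x"
      unfolding u_def by (rule lp_norm_scale[OF x p0])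
    then have "lp_norm p u = 1" using r0 by (simp add: r_def norm_divide)
    then have Tu: "lp_norm q (T u) \<le> 1" using T_unit[OF u] by simp
    have "x = (\<lambda>n. of_real r * u n)" using r0 by (simp add: u_def)
    then have "T x = (\<lambda>n. of_real r * T u n)" using T_scale[OF u] by simp
    then have "lp_norm q (T x) = r * lp_norm q (T u)"
      using lp_norm_scale[OF T_lp[OF u] q0] r0 by simp
    also have "\<dots> \<le> r" using Tu r0 by simp
    finally show ?thesis by (simp add: r_def)
  qed
qed

end


lemma tendsto_norm_powr:
  fixes f :: "nat \<Rightarrow> 'a::real_normed_vector"
  assumes "f \<longlonglongrightarrow> a" "p > 0"
  shows "(\<lambda>k. norm (f k) powr p) \<longlonglongrightarrow> norm a powr p"
  by (rule tendsto_powr2) (auto intro: tendsto_norm assms)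

definition blk :: "nat \<Rightarrow> nat \<Rightarrow> (nat \<Rightarrow> 'a::real_normed_field) \<Rightarrow> nat \<Rightarrow> 'a" where
  "blk a b x = (\<lambda>n. if a \<le> n \<and> n < b then x n else 0)"

lemma lp_blk: "blk a b x \<in> lp p"
  unfolding lp_iff
  by (rule summable_finite[of "{a..<b}"]) (auto simp: blk_def)

lemma S_blk_le: "x \<in> lp p \<Longrightarrow> S p (blk a b x) \<le> S p x"
  unfolding S_def using lp_blk[of a b x p]
  by (intro suminf_le) (auto simp: blk_def lp_iff)

lemma tail_tendsto:
  assumes "x \<in> lp p"
  shows "(\<lambda>b. \<Sum>n. norm (x (n+b)) powr p) \<longlonglongrightarrow> 0"
proof -
  have s: "summable (\<lambda>n. norm (x n) powr p)" using assms by (simp add: lp_iff)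
  have "(\<lambda>b. (\<Sum>n. norm (x n) powr p) - (\<Sum>i<b. norm (x i) powr p)) \<longlonglongrightarrow> (\<Sum>n. norm (x n) powr p) - (\<Sum>n. norm (x n) powr p)"
    by (intro tendsto_diff tendsto_const summable_LIMSEQ s)
  then show ?thesis using suminf_minus_initial_segment[OF s] by simp
qed

lemma head_tendsto:
  fixes f :: "nat \<Rightarrow> nat \<Rightarrow> 'a::real_normed_vector"
  assumes "\<forall>n. (\<lambda>k. f k n) \<longlonglongrightarrow> 0" "p > 0"
  shows "(\<lambda>k. \<Sum>n<A. norm (f k n) powr p) \<longlonglongrightarrow> 0"
proof -
  have "(\<lambda>k. \<Sum>n<A. norm (f k n) powr p) \<longlonglongrightarrow> (\<Sum>n<A. norm (0::'a) powr p)"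
    using assms by (intro tendsto_sum tendsto_norm_powr) auto
  then show ?thesis by simp
qed

lemma S_outside_le:
  assumes x: "x \<in> lp p" and ab: "a \<le> b" and p: "p \<ge> 0"
  shows "S p (\<lambda>n. x n - blk a b x n) \<le> (\<Sum>n<a. norm (x n) powr p) + (\<Sum>n. norm (x (n+b)) powr p)"
proof -
  define g where "g = (\<lambda>n. norm (x n - blk a b x n) powr p)"
  have "(\<lambda>n. x n - blk a b x n) \<in> lp p" by (rule lp_diff[OF x lp_blk p])
  then have sg: "summable g" by (simp add: g_def lp_iff)
  have "S p (\<lambda>n. x n - blk a b x n) = (\<Sum>n. g (n+b)) + (\<Sum>i<b. g i)"
    unfolding S_def g_def[symmetric] by (rule suminf_split_initial_segment[OF sg])
  also have "(\<lambda>n. g (n+b)) = (\<lambda>n. norm (x (n+b)) powr p)" by (rule ext) (simp add: g_def blk_def)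
  also have "(\<Sum>i<b. g i) = (\<Sum>i<a. g i)"
    using ab by (intro sum.mono_neutral_right) (auto simp: g_def blk_def)
  also have "(\<Sum>i<a. g i) = (\<Sum>n<a. norm (x n) powr p)"
    by (intro sum.cong) (auto simp: g_def blk_def)
  finally show ?thesis by simp
qed

lemma chain_mono:
  fixes a :: "nat \<Rightarrow> nat"
  assumes "\<forall>i<N. a i \<le> a (Suc i)" "i \<le> j" "j \<le> N"
  shows "a i \<le> a j"
  using assms(2,3)
proof (induction j)
  case 0 then show ?case by simp
next
  case (Suc j)
  show ?case
  proof (cases "i = Suc j")
    case True then show ?thesis by simp
  next
    case False
    then have "a i \<le> a j" using Suc by simp
    also have "a j \<le> a (Suc j)" using assms(1) Suc by simp
    finally show ?thesis .
  qed
qed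

lemma sum_single_nz:
  fixes g :: "nat \<Rightarrow> 'b::comm_monoid_add"
  assumes "finite I" "\<And>i. i \<in> I \<Longrightarrow> i \<noteq> i0 \<Longrightarrow> g i = 0"
  shows "(\<Sum>i\<in>I. g i) = (if i0 \<in> I then g i0 else 0)"
proof (cases "i0 \<in> I")
  case True
  then have "(\<Sum>i\<in>I. g i) = g i0 + (\<Sum>i\<in>I-{i0}. g i)" using assms(1) by (simp add: sum.remove)
  also have "(\<Sum>i\<in>I-{i0}. g i) = 0" using assms(2) by (intro sum.neutral) auto
  finally show ?thesis using True by simp
next
  case False
  then show ?thesis using assms by (intro trans[OF sum.neutral]) auto
qed

lemma S_disj_sum:
  assumes ch: "\<forall>i<N. a i \<le> a (Suc i)"
  shows "S p (\<lambda>n. \<Sum>i<N. blk (a i) (a (Suc i)) (f i) n) = (\<Sum>i<N. S p (blk (a i) (a (Suc i)) (f i)))"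
proof -
  define B where "B i = blk (a i) (a (Suc i)) (f i)" for i
  have pt: "norm (\<Sum>i<N. B i n) powr p = (\<Sum>i<N. norm (B i n) powr p)" for n
  proof (cases "\<exists>i0<N. a i0 \<le> n \<and> n < a (Suc i0)")
    case True
    then obtain i0 where i0: "i0 < N" "a i0 \<le> n" "n < a (Suc i0)" by blast
    have z: "B i n = 0" if "i < N" "i \<noteq> i0" for i
    proof (cases "i < i0")
      case True
      then have "a (Suc i) \<le> a i0" using ch i0 by (intro chain_mono[OF ch]) auto
      then show ?thesis using i0 by (simp add: B_def blk_def)
    next
      case False
      then have "Suc i0 \<le> i" using that by simp
      then have "a (Suc i0) \<le> a i" using ch that by (intro chain_mono[OF ch]) auto
      then show ?thesis using i0 by (simp add: B_def blk_def)
    qed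
    have "(\<Sum>i<N. B i n) = B i0 n" using sum_single_nz[of "{..<N}" i0 "\<lambda>i. B i n"] z i0 by simp
    moreover have "(\<Sum>i<N. norm (B i n) powr p) = norm (B i0 n) powr p"
      using sum_single_nz[of "{..<N}" i0 "\<lambda>i. norm (B i n) powr p"] z i0 by simp
    ultimately show ?thesis by simp
  next
    case False
    then have "B i n = 0" if "i < N" for i using that by (auto simp: B_def blk_def)
    then show ?thesis by simp
  qed
  have "S p (\<lambda>n. \<Sum>i<N. B i n) = (\<Sum>n. \<Sum>i<N. norm (B i n) powr p)"
    unfolding S_def using pt by simp
  also have "\<dots> = (\<Sum>i<N. \<Sum>n. norm (B i n) powr p)"
    using lp_blk by (intro suminf_sum) (auto simp: B_def lp_iff)
  finally show ?thesis by (simp add: B_def S_def)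
qed

lemma fatou:
  fixes z :: "nat \<Rightarrow> nat \<Rightarrow> 'a::real_normed_field"
  assumes z: "\<And>k. z k \<in> lp p" and Sb: "\<And>k. S p (z k) \<le> B" and lim: "\<forall>n. (\<lambda>k. z k n) \<longlonglongrightarrow> w n"
    and p: "p > 0"
  shows "w \<in> lp p \<and> S p w \<le> B"
proof -
  have ps: "(\<Sum>n<M. norm (w n) powr p) \<le> B" for M
  proof -
    have "(\<lambda>k. \<Sum>n<M. norm (z k n) powr p) \<longlonglongrightarrow> (\<Sum>n<M. norm (w n) powr p)"
      using lim p by (intro tendsto_sum tendsto_norm_powr) auto
    moreover have "(\<Sum>n<M. norm (z k n) powr p) \<le> B" for k
    proof -
      have "(\<Sum>n<M. norm (z k n) powr p) \<le> S p (z k)"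
        unfolding S_def using z[of k] by (intro sum_le_suminf) (auto simp: lp_iff)
      then show ?thesis using Sb[of k] by simp
    qed
    ultimately show ?thesis by (intro LIMSEQ_le_const2) auto
  qed
  have sw: "summable (\<lambda>n. norm (w n) powr p)"
    by (rule summableI_nonneg_bounded[where x=B]) (use ps in auto)
  then show ?thesis using ps by (auto simp: lp_iff S_def intro!: suminf_le_const)
qed


lemma lp_sum': "finite I \<Longrightarrow> (\<And>i. i \<in> I \<Longrightarrow> f i \<in> lp r) \<Longrightarrow> r \<ge> 0 \<Longrightarrow> (\<lambda>n. \<Sum>i\<in>I. f i n) \<in> lp r"
proof (induction I rule: finite_induct)
  case empty then show ?case by (simp add: lp_zero)
next
  case (insert a F)
  then show ?case using lp_add[of "f a" r "\<lambda>n. \<Sum>i\<in>F. f i n"] by simp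
qed

lemma minkowski_sum:
  assumes "finite I" "\<And>i. i \<in> I \<Longrightarrow> f i \<in> lp p" "p \<ge> 1"
  shows "lp_norm p (\<lambda>n. \<Sum>i\<in>I. f i n) \<le> (\<Sum>i\<in>I. lp_norm p (f i))"
  using assms
proof (induction I rule: finite_induct)
  case empty then show ?case by (simp add: lp_norm_zero)
next
  case (insert a F)
  have F: "(\<lambda>n. \<Sum>i\<in>F. f i n) \<in> lp p" using insert by (intro lp_sum') auto
  have "lp_norm p (\<lambda>n. \<Sum>i\<in>insert a F. f i n) = lp_norm p (\<lambda>n. f a n + (\<Sum>i\<in>F. f i n))"
    using insert by simp
  also have "\<dots> \<le> lp_norm p (f a) + lp_norm p (\<lambda>n. \<Sum>i\<in>F. f i n)"
    using insert F by (intro minkowski) auto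
  also have "\<dots> \<le> lp_norm p (f a) + (\<Sum>i\<in>F. lp_norm p (f i))"
    using insert by simp
  finally show ?case using insert by simp
qed

lemma exists_N:
  fixes \<alpha> \<beta> c :: real
  assumes "0 \<le> \<beta>" "\<beta> < \<alpha>" "c > 0"
  shows "\<exists>N::nat. N \<ge> 1 \<and> real N powr \<alpha> * c > 2 * real N powr \<beta> + 2"
proof -
  define t where "t = \<alpha> - \<beta>"
  have t: "t > 0" using assms by (simp add: t_def)
  define N where "N = nat \<lceil>(4/c) powr (1/t)\<rceil> + 1"
  have N1: "N \<ge> 1" by (simp add: N_def)
  have "real N > (4/c) powr (1/t)" unfolding N_def by linarith
  then have "real N powr t > ((4/c) powr (1/t)) powr t"
    using t by (intro powr_less_mono2) auto
  also have "((4/c) powr (1/t)) powr t = 4/c" using t assms by (simp add: powr_powr)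
  finally have Nt: "real N powr t * c > 4" using assms by (simp add: field_simps)
  have Nb: "real N powr \<beta> \<ge> 1" using N1 assms by (intro ge_one_powr_ge_zero) auto
  have "real N powr \<alpha> = real N powr t * real N powr \<beta>"
    by (simp add: t_def powr_add[symmetric])
  then have "real N powr \<alpha> * c = (real N powr t * c) * real N powr \<beta>" by simp
  also have "\<dots> > 4 * real N powr \<beta>" using Nt Nb N1 by (intro mult_strict_right_mono) auto
  finally show ?thesis using N1 Nb by (intro exI[of _ N]) auto
qed

lemma hump:
  fixes f g :: "nat \<Rightarrow> nat \<Rightarrow> 'a::real_normed_field"
  assumes f: "\<And>k. f k \<in> lp p" and g: "\<And>k. g k \<in> lp q" and p: "p > 0" and q: "q > 0"
    and fl: "\<forall>n. (\<lambda>k. f k n) \<longlonglongrightarrow> 0" and gl: "\<forall>n. (\<lambda>k. g k n) \<longlonglongrightarrow> 0"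
    and freq: "\<And>K. \<exists>k\<ge>K. Q k" and e: "e > 0"
  shows "\<exists>ks a. a 0 = 0 \<and> (\<forall>i<N. a i \<le> a (Suc i) \<and> Q (ks i) \<and>
       S p (\<lambda>n. f (ks i) n - blk (a i) (a (Suc i)) (f (ks i)) n) < e \<and>
       S q (\<lambda>n. g (ks i) n - blk (a i) (a (Suc i)) (g (ks i)) n) < e)"
proof (induction N)
  case 0 show ?case by (rule exI[of _ "\<lambda>i. 0"], rule exI[of _ "\<lambda>i. 0"]) simp
next
  case (Suc N)
  then obtain ks a where IH0: "a 0 = 0" and IH: "\<forall>i<N. a i \<le> a (Suc i) \<and> Q (ks i) \<and>
       S p (\<lambda>n. f (ks i) n - blk (a i) (a (Suc i)) (f (ks i)) n) < e \<and>
       S q (\<lambda>n. g (ks i) n - blk (a i) (a (Suc i)) (g (ks i)) n) < e" by blast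
  define A where "A = a N"
  have "eventually (\<lambda>k. (\<Sum>n<A. norm (f k n) powr p) < e/2) sequentially"
    using head_tendsto[OF fl p] e by (intro order_tendstoD(2)) auto
  moreover have "eventually (\<lambda>k. (\<Sum>n<A. norm (g k n) powr q) < e/2) sequentially"
    using head_tendsto[OF gl q] e by (intro order_tendstoD(2)) auto
  ultimately have "eventually (\<lambda>k. (\<Sum>n<A. norm (f k n) powr p) < e/2 \<and> (\<Sum>n<A. norm (g k n) powr q) < e/2) sequentially"
    by (rule eventually_conj)
  then obtain K where K: "\<And>k. k \<ge> K \<Longrightarrow> (\<Sum>n<A. norm (f k n) powr p) < e/2 \<and> (\<Sum>n<A. norm (g k n) powr q) < e/2"
    by (auto simp: eventually_sequentially)
  obtain k where k: "k \<ge> K" "Q k" using freq by blast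
  have "eventually (\<lambda>b. (\<Sum>n. norm (f k (n+b)) powr p) < e/2) sequentially"
    using tail_tendsto[OF f] e by (intro order_tendstoD(2)) auto
  moreover have "eventually (\<lambda>b. (\<Sum>n. norm (g k (n+b)) powr q) < e/2) sequentially"
    using tail_tendsto[OF g] e by (intro order_tendstoD(2)) auto
  ultimately have "eventually (\<lambda>b. (\<Sum>n. norm (f k (n+b)) powr p) < e/2 \<and> (\<Sum>n. norm (g k (n+b)) powr q) < e/2) sequentially"
    by (rule eventually_conj)
  then obtain B0 where B0: "\<And>b. b \<ge> B0 \<Longrightarrow> (\<Sum>n. norm (f k (n+b)) powr p) < e/2 \<and> (\<Sum>n. norm (g k (n+b)) powr q) < e/2"
    by (auto simp: eventually_sequentially)
  define b where "b = max A B0"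
  have Ab: "A \<le> b" by (simp add: b_def)
  have of: "S p (\<lambda>n. f k n - blk A b (f k) n) < e"
  proof -
    have "S p (\<lambda>n. f k n - blk A b (f k) n) \<le> (\<Sum>n<A. norm (f k n) powr p) + (\<Sum>n. norm (f k (n+b)) powr p)"
      using p by (intro S_outside_le[OF f Ab]) auto
    also have "\<dots> < e/2 + e/2" using K[OF k(1)] B0[of b] by (intro add_strict_mono) (auto simp: b_def)
    finally show ?thesis by simp
  qed
  have og: "S q (\<lambda>n. g k n - blk A b (g k) n) < e"
  proof -
    have "S q (\<lambda>n. g k n - blk A b (g k) n) \<le> (\<Sum>n<A. norm (g k n) powr q) + (\<Sum>n. norm (g k (n+b)) powr q)"
      using q by (intro S_outside_le[OF g Ab]) auto
    also have "\<dots> < e/2 + e/2" using K[OF k(1)] B0[of b] by (intro add_strict_mono) (auto simp: b_def)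
    finally show ?thesis by simp
  qed
  define ks' where "ks' = ks(N := k)"
  define a' where "a' = a(Suc N := b)"
  have "a' 0 = 0" using IH0 by (simp add: a'_def)
  moreover have "\<forall>i<Suc N. a' i \<le> a' (Suc i) \<and> Q (ks' i) \<and>
       S p (\<lambda>n. f (ks' i) n - blk (a' i) (a' (Suc i)) (f (ks' i)) n) < e \<and>
       S q (\<lambda>n. g (ks' i) n - blk (a' i) (a' (Suc i)) (g (ks' i)) n) < e"
  proof (intro allI impI)
    fix i assume i: "i < Suc N"
    show "a' i \<le> a' (Suc i) \<and> Q (ks' i) \<and>
       S p (\<lambda>n. f (ks' i) n - blk (a' i) (a' (Suc i)) (f (ks' i)) n) < e \<and>
       S q (\<lambda>n. g (ks' i) n - blk (a' i) (a' (Suc i)) (g (ks' i)) n) < e"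
    proof (cases "i < N")
      case True
      then have "a' i = a i" "a' (Suc i) = a (Suc i)" "ks' i = ks i" by (auto simp: a'_def ks'_def)
      then show ?thesis using IH True by simp
    next
      case False
      then have "i = N" using i by simp
      then have "a' i = A" "a' (Suc i) = b" "ks' i = k" by (auto simp: a'_def ks'_def A_def)
      then show ?thesis using Ab k of og by simp
    qed
  qed
  ultimately show ?case by blast
qed

lemma radon_riesz:
  fixes z :: "nat \<Rightarrow> nat \<Rightarrow> 'a::real_normed_field"
  assumes z: "\<And>k. z k \<in> lp p" and x: "x \<in> lp p" and p: "p > 0"
    and Sz: "\<And>k. S p (z k) = 1" and Sx: "S p x = 1" and lim: "\<forall>n. (\<lambda>k. z k n) \<longlonglongrightarrow> x n"
    and \<epsilon>: "\<epsilon> > 0"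
  shows "\<exists>K. \<forall>k\<ge>K. S p (\<lambda>n. z k n - x n) < \<epsilon>"
proof -
  define \<eta> where "\<eta> = \<epsilon> / (1 + 3 * 2 powr p)"
  have den: "1 + 3 * 2 powr p > (0::real)" by (simp add: add_pos_nonneg)
  then have \<eta>: "\<eta> > 0" using \<epsilon> by (simp add: \<eta>_def)
  have sx: "summable (\<lambda>n. norm (x n) powr p)" using x by (simp add: lp_iff)
  have sz: "\<And>k. summable (\<lambda>n. norm (z k n) powr p)" using z by (simp add: lp_iff)
  obtain M where M: "(\<Sum>n. norm (x (n+M)) powr p) < \<eta>"
    using order_tendstoD(2)[OF tail_tendsto[OF x] \<eta>] by (auto simp: eventually_sequentially)
  define Hx where "Hx = (\<Sum>n<M. norm (x n) powr p)"
  have Hx: "(\<Sum>n. norm (x (n+M)) powr p) + Hx = 1"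
    using suminf_split_initial_segment[OF sx, of M] Sx by (simp add: S_def Hx_def)
  have "(\<lambda>k. \<Sum>n<M. norm (z k n) powr p) \<longlonglongrightarrow> Hx"
    unfolding Hx_def using lim p by (intro tendsto_sum tendsto_norm_powr) auto
  then have ev1: "eventually (\<lambda>k. (\<Sum>n<M. norm (z k n) powr p) > Hx - \<eta>) sequentially"
    using \<eta> by (intro order_tendstoD(1)) auto
  have "(\<lambda>k. \<Sum>n<M. norm (z k n - x n) powr p) \<longlonglongrightarrow> (\<Sum>n<M. norm (x n - x n) powr p)"
    using lim p by (intro tendsto_sum tendsto_norm_powr tendsto_diff) auto
  then have ev2: "eventually (\<lambda>k. (\<Sum>n<M. norm (z k n - x n) powr p) < \<eta>) sequentially"
    using \<eta> by (intro order_tendstoD(2)) auto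
  obtain K where K: "\<And>k. k \<ge> K \<Longrightarrow> (\<Sum>n<M. norm (z k n) powr p) > Hx - \<eta> \<and> (\<Sum>n<M. norm (z k n - x n) powr p) < \<eta>"
    using eventually_conj[OF ev1 ev2] by (auto simp: eventually_sequentially)
  have "S p (\<lambda>n. z k n - x n) < \<epsilon>" if k: "k \<ge> K" for k
  proof -
    have d: "(\<lambda>n. z k n - x n) \<in> lp p" using lp_diff[OF z x] p by simp
    then have sd: "summable (\<lambda>n. norm (z k n - x n) powr p)" by (simp add: lp_iff)
    have Hz: "(\<Sum>n. norm (z k (n+M)) powr p) + (\<Sum>n<M. norm (z k n) powr p) = 1"
      using suminf_split_initial_segment[OF sz, of k M] Sz[of k] by (simp add: S_def)
    have tz: "(\<Sum>n. norm (z k (n+M)) powr p) < 2 * \<eta>" using Hz Hx K[OF k] M by linarith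
    have "(\<Sum>n. norm (z k (n+M) - x (n+M)) powr p)
        \<le> (\<Sum>n. 2 powr p * (norm (z k (n+M)) powr p + norm (x (n+M)) powr p))"
    proof (rule suminf_le)
      show "\<And>n. norm (z k (n+M) - x (n+M)) powr p \<le> 2 powr p * (norm (z k (n+M)) powr p + norm (x (n+M)) powr p)"
        using pow_add_le[of p "z k (n+M)" "- x (n+M)" for n] p by simp
      show "summable (\<lambda>n. norm (z k (n+M) - x (n+M)) powr p)"
        using summable_ignore_initial_segment[OF sd, of M] by simp
      show "summable (\<lambda>n. 2 powr p * (norm (z k (n+M)) powr p + norm (x (n+M)) powr p))"
        by (intro summable_mult summable_add summable_ignore_initial_segment sz sx)
    qed
    also have "\<dots> = 2 powr p * ((\<Sum>n. norm (z k (n+M)) powr p) + (\<Sum>n. norm (x (n+M)) powr p))"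
    proof -
      have s1: "summable (\<lambda>n. norm (z k (n+M)) powr p)" "summable (\<lambda>n. norm (x (n+M)) powr p)"
        by (intro summable_ignore_initial_segment sz sx)+
      have "(\<Sum>n. 2 powr p * (norm (z k (n+M)) powr p + norm (x (n+M)) powr p))
          = 2 powr p * (\<Sum>n. (norm (z k (n+M)) powr p + norm (x (n+M)) powr p))"
        by (rule suminf_mult) (intro summable_add s1)
      also have "(\<Sum>n. (norm (z k (n+M)) powr p + norm (x (n+M)) powr p))
          = (\<Sum>n. norm (z k (n+M)) powr p) + (\<Sum>n. norm (x (n+M)) powr p)"
        by (rule suminf_add[symmetric]) (rule s1)+
      finally show ?thesis .
    qed
    also have "\<dots> \<le> 2 powr p * (3 * \<eta>)"
      using tz M by (intro mult_left_mono) auto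
    finally have tail: "(\<Sum>n. norm (z k (n+M) - x (n+M)) powr p) \<le> 2 powr p * (3 * \<eta>)" .
    have "S p (\<lambda>n. z k n - x n) = (\<Sum>n. norm (z k (n+M) - x (n+M)) powr p) + (\<Sum>n<M. norm (z k n - x n) powr p)"
      unfolding S_def using suminf_split_initial_segment[OF sd, of M] by simp
    also have "\<dots> < 2 powr p * (3 * \<eta>) + \<eta>" using tail K[OF k] by linarith
    also have "\<dots> = \<eta> * (1 + 3 * 2 powr p)" by (simp add: algebra_simps)
    also have "\<dots> = \<epsilon>" unfolding \<eta>_def using den by simp
    finally show ?thesis .
  qed
  then show ?thesis by blast
qed


lemma lp_norm_less: "y \<in> lp p \<Longrightarrow> p > 0 \<Longrightarrow> S p y < e \<Longrightarrow> lp_norm p y < e powr (1/p)"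
  unfolding lp_norm_S using S_nonneg[of y p] by (intro powr_less_mono2) auto

lemma D_bound:
  assumes ch: "\<forall>i<N. a i \<le> a (Suc i)" and d: "\<And>k. d k \<in> lp p" and d2: "\<And>k. lp_norm p (d k) \<le> 2"
    and p: "p > 0"
  shows "lp_norm p (\<lambda>n. \<Sum>i<N. blk (a i) (a (Suc i)) (d (ks i)) n) \<le> 2 * real N powr (1/p)"
proof -
  have Sk: "S p (d k) \<le> 2 powr p" for k
    using lp_norm_pow[OF d p, of k] d2[of k] p by (metis lp_norm_nonneg powr_mono2 less_imp_le)
  have "S p (\<lambda>n. \<Sum>i<N. blk (a i) (a (Suc i)) (d (ks i)) n) = (\<Sum>i<N. S p (blk (a i) (a (Suc i)) (d (ks i))))"
    by (rule S_disj_sum[OF ch])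
  also have "\<dots> \<le> (\<Sum>i<N. 2 powr p)"
    by (intro sum_mono order.trans[OF S_blk_le[OF d] Sk])
  also have "\<dots> = (2 * real N powr (1/p)) powr p"
    using p by (simp add: powr_mult powr_powr)
  finally have le: "S p (\<lambda>n. \<Sum>i<N. blk (a i) (a (Suc i)) (d (ks i)) n) \<le> (2 * real N powr (1/p)) powr p" .
  have mem: "(\<lambda>n. \<Sum>i<N. blk (a i) (a (Suc i)) (d (ks i)) n) \<in> lp p"
    using p by (intro lp_sum') (auto simp: lp_blk)
  show ?thesis using S_le_iff[OF mem p, of "2 * real N powr (1/p)"] le by simp
qed

context opT begin

lemma T_coord_diff: "x \<in> lp p \<Longrightarrow> y \<in> lp p \<Longrightarrow> norm (T x m - T y m) \<le> lp_norm p (\<lambda>n. x n - y n)"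
proof -
  assume x: "x \<in> lp p" and y: "y \<in> lp p"
  have xy: "(\<lambda>n. x n - y n) \<in> lp p" using lp_diff[OF x y] p0 by simp
  have "norm (T x m - T y m) = norm (T (\<lambda>n. x n - y n) m)" using T_diff[OF x y] by simp
  also have "\<dots> \<le> lp_norm q (T (\<lambda>n. x n - y n))" by (rule coord_le[OF T_lp[OF xy] q0])
  also have "\<dots> \<le> lp_norm p (\<lambda>n. x n - y n)" by (rule T_bound[OF xy])
  finally show ?thesis .
qed

lemma T_norm_diff: "x \<in> lp p \<Longrightarrow> y \<in> lp p \<Longrightarrow> lp_norm q (\<lambda>m. T x m - T y m) \<le> lp_norm p (\<lambda>n. x n - y n)"
proof -
  assume x: "x \<in> lp p" and y: "y \<in> lp p"
  have xy: "(\<lambda>n. x n - y n) \<in> lp p" using lp_diff[OF x y] p0 by simp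
  show ?thesis using T_bound[OF xy] T_diff[OF x y] by simp
qed

lemma step4:
  assumes p1': "p > 1"
    and d: "\<And>k. d k \<in> lp p" and d2: "\<And>k. lp_norm p (d k) \<le> 2"
    and dl: "\<forall>n. (\<lambda>k. d k n) \<longlonglongrightarrow> 0" and vl: "\<forall>m. (\<lambda>k. T (d k) m) \<longlonglongrightarrow> v m"
  shows "v = (\<lambda>m. 0)"
proof (rule ccontr)
  assume "v \<noteq> (\<lambda>m. 0)"
  then obtain m where vm: "v m \<noteq> 0" by auto
  define c where "c = norm (v m)"
  have c: "c > 0" using vm by (simp add: c_def)
  have ev: "eventually (\<lambda>k. norm (T (d k) m - v m) < c/2) sequentially"
  proof -
    have "c/2 > 0" using c by simp
    then show ?thesis using vl unfolding tendsto_iff dist_norm by blast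
  qed
  have freq: "\<exists>k\<ge>K. norm (T (d k) m - v m) < c/2" for K
  proof -
    obtain K0 where "\<forall>k\<ge>K0. norm (T (d k) m - v m) < c/2" using ev by (auto simp: eventually_sequentially)
    then show ?thesis by (intro exI[of _ "max K K0"]) auto
  qed
  obtain N :: nat where N1: "N \<ge> 1" and N: "real N powr 1 * (c/4) > 2 * real N powr (1/p) + 2"
    using exists_N[of "1/p" 1 "c/4"] p1' c by auto
  define m' where "m' = min (c/4) 1"
  have m': "m' > 0" "m' \<le> c/4" using c by (auto simp: m'_def)
  define e where "e = m' powr p"
  have e: "e > 0" using m' by (simp add: e_def)
  have ep: "e powr (1/p) = m'" using m' p0 by (simp add: e_def powr_powr)
  obtain ks a where a0: "a 0 = 0" and H: "\<forall>i<N. a i \<le> a (Suc i) \<and> norm (T (d (ks i)) m - v m) < c/2 \<and>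
       S p (\<lambda>n. d (ks i) n - blk (a i) (a (Suc i)) (d (ks i)) n) < e \<and>
       S p (\<lambda>n. (\<lambda>k n. 0::'a) (ks i) n - blk (a i) (a (Suc i)) ((\<lambda>k n. 0::'a) (ks i)) n) < e"
    using hump[of d p "\<lambda>k n. 0" p "\<lambda>k. norm (T (d k) m - v m) < c/2" e N, OF d lp_zero p0 p0 dl _ freq e] by auto
  have ch: "\<forall>i<N. a i \<le> a (Suc i)" using H by auto
  define d' where "d' i = blk (a i) (a (Suc i)) (d (ks i))" for i
  define D where "D = (\<lambda>n. \<Sum>i<N. d' i n)"
  have d'lp: "d' i \<in> lp p" for i by (simp add: d'_def lp_blk)
  have Dlp: "D \<in> lp p" unfolding D_def using p0 d'lp by (intro lp_sum') auto
  have Dn: "lp_norm p D \<le> 2 * real N powr (1/p)"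
    unfolding D_def d'_def by (rule D_bound[OF ch d d2 p0])
  have TD: "T D = (\<lambda>n. \<Sum>i<N. T (d' i) n)" unfolding D_def by (rule T_sum) (auto simp: d'lp)
  have up: "norm (T D m) \<le> 2 * real N powr (1/p)"
    using coord_le[OF T_lp[OF Dlp] q0, of m] T_bound[OF Dlp] Dn by linarith
  have each: "norm (T (d' i) m - v m) \<le> 3 * c / 4" if i: "i < N" for i
  proof -
    have "norm (T (d' i) m - T (d (ks i)) m) \<le> lp_norm p (\<lambda>n. d' i n - d (ks i) n)"
      by (rule T_coord_diff[OF d'lp d])
    also have "\<dots> = lp_norm p (\<lambda>n. d (ks i) n - d' i n)" by (rule lp_norm_commute)
    also have "\<dots> < e powr (1/p)"
      using H i p0 lp_diff[OF d d'lp] by (intro lp_norm_less) (auto simp: d'_def)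
    finally have 1: "norm (T (d' i) m - T (d (ks i)) m) < m'" using ep by simp
    have 2: "norm (T (d (ks i)) m - v m) < c/2" using H i by auto
    have "norm (T (d' i) m - v m) \<le> norm (T (d' i) m - T (d (ks i)) m) + norm (T (d (ks i)) m - v m)"
      by (rule order.trans[OF _ norm_triangle_ineq]) simp
    then show ?thesis using 1 2 m' by linarith
  qed
  have "norm (T D m - of_nat N * v m) = norm (\<Sum>i<N. (T (d' i) m - v m))"
    by (simp add: TD sum_subtractf)
  also have "\<dots> \<le> (\<Sum>i<N. norm (T (d' i) m - v m))" by (rule norm_sum)
  also have "\<dots> \<le> (\<Sum>i<N. 3 * c / 4)" by (intro sum_mono each) auto
  also have "\<dots> = real N * (3 * c / 4)" by simp
  finally have lo: "norm (T D m - of_nat N * v m) \<le> real N * (3 * c / 4)" .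
  have "norm (of_nat N * v m :: 'a) = real N * c" by (simp add: c_def norm_mult)
  then have "real N * c \<le> norm (T D m) + real N * (3 * c / 4)"
    using lo norm_triangle_ineq2[of "of_nat N * v m" "T D m"] by (simp add: norm_minus_commute)
  then have "real N * (c/4) \<le> 2 * real N powr (1/p)" using up by (simp add: algebra_simps)
  then show False using N N1 by simp
qed

lemma step5:
  assumes qp: "q < p"
    and d: "\<And>k. d k \<in> lp p" and d2: "\<And>k. lp_norm p (d k) \<le> 2"
    and dl: "\<forall>n. (\<lambda>k. d k n) \<longlonglongrightarrow> 0" and wl: "\<forall>m. (\<lambda>k. T (d k) m) \<longlonglongrightarrow> 0"
  shows "(\<lambda>k. lp_norm q (T (d k))) \<longlonglongrightarrow> 0"
proof (rule ccontr)
  assume nt: "\<not> (\<lambda>k. lp_norm q (T (d k))) \<longlonglongrightarrow> 0"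
  obtain \<delta> where \<delta>: "\<delta> > 0" and freq: "\<And>K. \<exists>k\<ge>K. lp_norm q (T (d k)) \<ge> \<delta>"
  proof -
    from nt obtain r where r: "r > 0" "\<not> (\<exists>K. \<forall>k\<ge>K. norm (lp_norm q (T (d k)) - 0) < r)"
      unfolding LIMSEQ_def dist_norm by blast
    then have h: "\<forall>K. \<exists>k\<ge>K. r \<le> \<bar>lp_norm q (T (d k))\<bar>" by (auto simp: not_less)
    have "\<exists>k\<ge>K. lp_norm q (T (d k)) \<ge> r" for K
      using h[rule_format, of K] by (metis abs_of_nonneg lp_norm_nonneg)
    then show ?thesis using that r by blast
  qed
  have Td: "T (d k) \<in> lp q" for k by (rule T_lp[OF d])
  obtain N :: nat where N1: "N \<ge> 1" and N: "real N powr (1/q) * (\<delta>/2) > 2 * real N powr (1/p) + 2"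
    using exists_N[of "1/p" "1/q" "\<delta>/2"] qp q1 \<delta> by (auto simp: divide_strict_left_mono)
  define m' where "m' = min (\<delta>/2) (1 / real N)"
  have N1': "1 / real N \<le> 1" using N1 by simp
  have m'0: "m' > 0" "m' \<le> \<delta>/2" "m' \<le> 1 / real N" using \<delta> N1 by (auto simp: m'_def)
  have m': "m' > 0" "m' \<le> \<delta>/2" "m' \<le> 1 / real N" "m' \<le> 1" using m'0 N1' by linarith+
  define e where "e = m' powr p"
  have e: "e > 0" using m' by (simp add: e_def)
  have ep: "e powr (1/p) = m'" using m' p0 by (simp add: e_def powr_powr)
  have eq: "e powr (1/q) \<le> m'"
  proof -
    have "e powr (1/q) = m' powr (p/q)" using p0 q0 by (simp add: e_def powr_powr)
    also have "\<dots> \<le> m' powr 1" using m' qp q0 by (intro powr_mono') auto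
    finally show ?thesis using m' by simp
  qed
  obtain ks a where a0: "a 0 = 0" and H: "\<forall>i<N. a i \<le> a (Suc i) \<and> lp_norm q (T (d (ks i))) \<ge> \<delta> \<and>
       S p (\<lambda>n. d (ks i) n - blk (a i) (a (Suc i)) (d (ks i)) n) < e \<and>
       S q (\<lambda>n. T (d (ks i)) n - blk (a i) (a (Suc i)) (T (d (ks i))) n) < e"
    using hump[of d p "\<lambda>k. T (d k)" q "\<lambda>k. lp_norm q (T (d k)) \<ge> \<delta>" e N, OF d Td p0 q0 dl wl freq e] by auto
  have ch: "\<forall>i<N. a i \<le> a (Suc i)" using H by auto
  define d' where "d' i = blk (a i) (a (Suc i)) (d (ks i))" for i
  define w where "w i = blk (a i) (a (Suc i)) (T (d (ks i)))" for i
  define D where "D = (\<lambda>n. \<Sum>i<N. d' i n)"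
  define W where "W = (\<lambda>n. \<Sum>i<N. w i n)"
  have d'lp: "d' i \<in> lp p" for i by (simp add: d'_def lp_blk)
  have wlp: "w i \<in> lp q" for i by (simp add: w_def lp_blk)
  have Dlp: "D \<in> lp p" unfolding D_def using p0 d'lp by (intro lp_sum') auto
  have Wlp: "W \<in> lp q" unfolding W_def using q0 wlp by (intro lp_sum') auto
  have Dn: "lp_norm p D \<le> 2 * real N powr (1/p)"
    unfolding D_def d'_def by (rule D_bound[OF ch d d2 p0])
  have TD: "T D = (\<lambda>n. \<Sum>i<N. T (d' i) n)" unfolding D_def by (rule T_sum) (auto simp: d'lp)
  have TDlp: "T D \<in> lp q" by (rule T_lp[OF Dlp])
  have err1: "lp_norm q (\<lambda>n. T (d (ks i)) n - w i n) \<le> m'" if i: "i < N" for i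
  proof -
    have "lp_norm q (\<lambda>n. T (d (ks i)) n - w i n) < e powr (1/q)"
      using H i q0 lp_diff[OF Td wlp] by (intro lp_norm_less) (auto simp: w_def)
    then show ?thesis using eq by simp
  qed
  have err2: "lp_norm q (\<lambda>n. T (d (ks i)) n - T (d' i) n) \<le> m'" if i: "i < N" for i
  proof -
    have "lp_norm q (\<lambda>n. T (d (ks i)) n - T (d' i) n) \<le> lp_norm p (\<lambda>n. d (ks i) n - d' i n)"
      by (rule T_norm_diff[OF d d'lp])
    also have "\<dots> < e powr (1/p)"
      using H i p0 lp_diff[OF d d'lp] by (intro lp_norm_less) (auto simp: d'_def)
    finally show ?thesis using ep by simp
  qed
  have wlow: "lp_norm q (w i) \<ge> \<delta>/2" if i: "i < N" for i
  proof -
    have "lp_norm q (T (d (ks i))) = lp_norm q (\<lambda>n. w i n + (T (d (ks i)) n - w i n))" by simp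
    also have "\<dots> \<le> lp_norm q (w i) + lp_norm q (\<lambda>n. T (d (ks i)) n - w i n)"
      using q1 by (intro minkowski wlp lp_diff[OF Td wlp]) auto
    moreover have "\<delta> \<le> lp_norm q (T (d (ks i)))" using H i by blast
    ultimately show ?thesis using err1[OF i] m' by linarith
  qed
  have SW: "S q W = (\<Sum>i<N. S q (w i))" unfolding W_def w_def by (rule S_disj_sum[OF ch])
  have "(\<Sum>i<N. (\<delta>/2) powr q) \<le> (\<Sum>i<N. S q (w i))"
  proof (intro sum_mono)
    fix i assume "i \<in> {..<N}"
    then have "(\<delta>/2) powr q \<le> lp_norm q (w i) powr q" using wlow \<delta> q0 by (intro powr_mono2) auto
    then show "(\<delta>/2) powr q \<le> S q (w i)" using lp_norm_pow[OF wlp q0] by simp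
  qed
  moreover have "(real N powr (1/q) * (\<delta>/2)) powr q = real N * (\<delta>/2) powr q"
    using q0 by (simp only: powr_mult powr_powr) simp
  ultimately have "S q W \<ge> (real N powr (1/q) * (\<delta>/2)) powr q"
    using SW by simp
  then have Wlow: "lp_norm q W \<ge> real N powr (1/q) * (\<delta>/2)"
    using lp_norm_pow[OF Wlp q0] q0 \<delta> powr_le_iff_base[of q "real N powr (1/q) * (\<delta>/2)" "lp_norm q W"]
    by (simp add: lp_norm_nonneg)
  have WTD: "lp_norm q (\<lambda>n. W n - T D n) \<le> 2"
  proof -
    have "(\<lambda>n. W n - T D n) = (\<lambda>n. \<Sum>i<N. (w i n - T (d' i) n))"
      by (simp add: W_def TD sum_subtractf)
    then have "lp_norm q (\<lambda>n. W n - T D n) \<le> (\<Sum>i<N. lp_norm q (\<lambda>n. w i n - T (d' i) n))"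
      using q1 by (simp add: minkowski_sum lp_diff[OF wlp T_lp[OF d'lp]])
    also have "\<dots> \<le> (\<Sum>i<N. 2 * m')"
    proof (intro sum_mono)
      fix i assume "i \<in> {..<N}"
      then have i: "i < N" by simp
      have "lp_norm q (\<lambda>n. w i n - T (d' i) n)
          = lp_norm q (\<lambda>n. (w i n - T (d (ks i)) n) + (T (d (ks i)) n - T (d' i) n))" by simp
      also have "\<dots> \<le> lp_norm q (\<lambda>n. w i n - T (d (ks i)) n) + lp_norm q (\<lambda>n. T (d (ks i)) n - T (d' i) n)"
        using q1 by (intro minkowski lp_diff wlp Td T_lp[OF d'lp]) auto
      also have "lp_norm q (\<lambda>n. w i n - T (d (ks i)) n) = lp_norm q (\<lambda>n. T (d (ks i)) n - w i n)"
        by (rule lp_norm_commute)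
      finally show "lp_norm q (\<lambda>n. w i n - T (d' i) n) \<le> 2 * m'" using err1[OF i] err2[OF i] by linarith
    qed
    also have "\<dots> = real N * (2 * m')" by simp
    also have "\<dots> \<le> 2" using m'(3) N1 by (simp add: field_simps)
    finally show ?thesis .
  qed
  have "lp_norm q W = lp_norm q (\<lambda>n. T D n + (W n - T D n))" by simp
  also have "\<dots> \<le> lp_norm q (T D) + lp_norm q (\<lambda>n. W n - T D n)"
    using q1 by (intro minkowski TDlp lp_diff[OF Wlp TDlp]) auto
  also have "\<dots> \<le> 2 * real N powr (1/p) + 2" using T_bound[OF Dlp] Dn WTD by linarith
  finally show False using Wlow N by linarith
qed

end


lemma part1:
  fixes T :: "(nat \<Rightarrow> 'a::{real_normed_field,heine_borel}) \<Rightarrow> (nat \<Rightarrow> 'a)"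
  assumes q1: "1 \<le> q" and qp: "q < p" and bo: "bounded_op p q T" and on: "op_norm p q T = 1"
    and \<epsilon>: "\<epsilon> > 0"
  shows "\<exists>\<eta>>0. \<forall>x0\<in>lp p. lp_norm p x0 = 1 \<and> lp_norm q (T x0) > 1 - \<eta> \<longrightarrow>
           (\<exists>x1\<in>lp p. lp_norm p x1 = 1 \<and> lp_norm q (T x1) = 1 \<and> lp_norm p (\<lambda>n. x1 n - x0 n) < \<epsilon>)"
proof (rule ccontr)
  interpret opT p q T using bo on q1 qp by unfold_locales auto
  define Bad where "Bad x0 \<longleftrightarrow> x0 \<in> lp p \<and> lp_norm p x0 = 1 \<and>
     \<not> (\<exists>x1\<in>lp p. lp_norm p x1 = 1 \<and> lp_norm q (T x1) = 1 \<and> lp_norm p (\<lambda>n. x1 n - x0 n) < \<epsilon>)" for x0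
  assume "\<not> ?thesis"
  then have neg: "\<And>\<eta>. \<eta> > 0 \<Longrightarrow> \<exists>x0. Bad x0 \<and> lp_norm q (T x0) > 1 - \<eta>"
    unfolding Bad_def by blast
  have "\<forall>k. \<exists>x0. Bad x0 \<and> lp_norm q (T x0) > 1 - inverse (real (Suc k))"
    using neg by simp
  then obtain X where X: "\<And>k. Bad (X k)" and XT: "\<And>k. lp_norm q (T (X k)) > 1 - inverse (real (Suc k))"
    by metis
  have Xlp: "X k \<in> lp p" and Xn: "lp_norm p (X k) = 1" for k using X[of k] by (auto simp: Bad_def)
  have TXn: "lp_norm q (T (X k)) \<le> 1" for k using T_bound[OF Xlp] Xn by simp
  define Z where "Z k n = (if even n then X k (n div 2) else T (X k) (n div 2))" for k n
  have Zb: "norm (Z k n) \<le> 1" for k n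
    using coord_le[OF Xlp p0, of k "n div 2"] coord_le[OF T_lp[OF Xlp] q0, of k "n div 2"] Xn[of k] TXn[of k]
    unfolding Z_def by (cases "even n") simp_all
  obtain r l where r: "strict_mono r" and rl: "\<forall>n. (\<lambda>k. Z (r k) n) \<longlonglongrightarrow> l n"
    using diag_subseq[of Z 1, OF Zb] by blast
  define x where "x n = l (2*n)" for n
  define y where "y n = l (2*n+1)" for n
  have xl: "\<forall>n. (\<lambda>k. X (r k) n) \<longlonglongrightarrow> x n"
  proof
    fix n show "(\<lambda>k. X (r k) n) \<longlonglongrightarrow> x n" using rl[rule_format, of "2*n"] by (simp add: Z_def x_def)
  qed
  have yl: "\<forall>n. (\<lambda>k. T (X (r k)) n) \<longlonglongrightarrow> y n"
  proof
    fix n show "(\<lambda>k. T (X (r k)) n) \<longlonglongrightarrow> y n" using rl[rule_format, of "2*n+1"] by (simp add: Z_def y_def)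
  qed
  have SX: "S p (X k) = 1" for k using lp_norm_pow[OF Xlp p0, of k] Xn by simp
  have fat: "x \<in> lp p \<and> S p x \<le> 1"
    by (rule fatou[of "\<lambda>k. X (r k)" p 1 x]) (use Xlp SX xl p0 in auto)
  then have xlp: "x \<in> lp p" and xn1: "lp_norm p x \<le> 1" using S_le_iff[of x p 1] p0 by auto
  define d where "d k = (\<lambda>n. X (r k) n - x n)" for k
  have dlp: "d k \<in> lp p" for k unfolding d_def using lp_diff[OF Xlp xlp] p0 by simp
  have d2: "lp_norm p (d k) \<le> 2" for k
  proof -
    have "lp_norm p (d k) = lp_norm p (\<lambda>n. X (r k) n + (- x n))" by (simp add: d_def)
    also have "\<dots> \<le> lp_norm p (X (r k)) + lp_norm p (\<lambda>n. - x n)"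
      using p1 by (intro minkowski Xlp lp_uminus xlp) auto
    also have "\<dots> \<le> 2" using Xn xn1 by (simp add: lp_norm_uminus)
    finally show ?thesis .
  qed
  have dl: "\<forall>n. (\<lambda>k. d k n) \<longlonglongrightarrow> 0"
  proof
    fix n
    have "(\<lambda>k. X (r k) n - x n) \<longlonglongrightarrow> x n - x n" using xl by (intro tendsto_diff) auto
    then show "(\<lambda>k. d k n) \<longlonglongrightarrow> 0" by (simp add: d_def)
  qed
  have Td: "T (d k) = (\<lambda>m. T (X (r k)) m - T x m)" for k unfolding d_def by (rule T_diff[OF Xlp xlp])
  have vl: "\<forall>m. (\<lambda>k. T (d k) m) \<longlonglongrightarrow> y m - T x m"
  proof
    fix m show "(\<lambda>k. T (d k) m) \<longlonglongrightarrow> y m - T x m" using yl by (simp add: Td) (intro tendsto_diff, auto)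
  qed
  have "(\<lambda>m. y m - T x m) = (\<lambda>m. 0)"
    by (rule step4[OF _ dlp d2 dl vl]) (use qp q1 in auto)
  then have wl: "\<forall>m. (\<lambda>k. T (d k) m) \<longlonglongrightarrow> 0" using vl by (metis)
  have Tdl: "(\<lambda>k. lp_norm q (T (d k))) \<longlonglongrightarrow> 0" by (rule step5[OF qp dlp d2 dl wl])
  have low: "1 - inverse (real (Suc k)) - lp_norm q (T (d k)) \<le> lp_norm q (T x)" for k
  proof -
    have rk: "k \<le> r k" using seq_suble[OF r] by simp
    have "inverse (real (Suc (r k))) \<le> inverse (real (Suc k))" using rk by (simp add: field_simps)
    then have a: "1 - inverse (real (Suc k)) < lp_norm q (T (X (r k)))" using XT[of "r k"] by linarith
    have "T (X (r k)) = (\<lambda>m. T x m + T (d k) m)" by (simp add: Td)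
    then have "lp_norm q (T (X (r k))) \<le> lp_norm q (T x) + lp_norm q (T (d k))"
      using q1 by (simp add: minkowski T_lp xlp dlp)
    then show ?thesis using a by linarith
  qed
  have "(\<lambda>k. 1 - inverse (real (Suc k)) - lp_norm q (T (d k))) \<longlonglongrightarrow> 1 - 0 - 0"
    by (intro tendsto_diff tendsto_const LIMSEQ_inverse_real_of_nat Tdl)
  then have Tx1: "1 \<le> lp_norm q (T x)" using low by (intro LIMSEQ_le_const2) auto
  have Txx: "lp_norm q (T x) \<le> lp_norm p x" by (rule T_bound[OF xlp])
  have xn: "lp_norm p x = 1" and Txn: "lp_norm q (T x) = 1" using Tx1 Txx xn1 by auto
  have Sx: "S p x = 1" using lp_norm_pow[OF xlp p0] xn by simp
  have "\<epsilon> powr p > 0" using \<epsilon> by simp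
  then obtain K where K: "\<And>k. k \<ge> K \<Longrightarrow> S p (\<lambda>n. X (r k) n - x n) < \<epsilon> powr p"
    using radon_riesz[of "\<lambda>k. X (r k)" p x, OF Xlp xlp p0 SX Sx xl] by blast
  have "lp_norm p (d K) < (\<epsilon> powr p) powr (1/p)"
    using K[of K] dlp p0 by (intro lp_norm_less) (auto simp: d_def)
  then have dK: "lp_norm p (\<lambda>n. x n - X (r K) n) < \<epsilon>"
    using \<epsilon> p0 lp_norm_commute[of p x "X (r K)"] by (simp add: powr_powr d_def)
  then show False using X[of "r K"] xlp xn Txn by (auto simp: Bad_def)
qed


lemma unit_lp_mono:
  fixes y :: "nat \<Rightarrow> 'a::real_normed_field"
  assumes y: "y \<in> lp p" and Sy: "S p y = 1" and p: "p > 0" and pq: "p \<le> q"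
  shows "y \<in> lp q \<and> S q y \<le> 1"
proof -
  have sy: "summable (\<lambda>n. norm (y n) powr p)" using y by (simp add: lp_iff)
  have le1: "norm (y n) \<le> 1" for n
  proof -
    have "norm (y n) powr p \<le> S p y"
      unfolding S_def using sum_le_suminf[OF sy, of "{n}"] by simp
    then have "norm (y n) powr p \<le> 1 powr p" using Sy by simp
    then show ?thesis using powr_le_iff_base[OF p, of "norm (y n)" 1] by simp
  qed
  have cmp: "norm (y n) powr q \<le> norm (y n) powr p" for n
    using le1[of n] pq by (intro powr_mono') auto
  have sq: "summable (\<lambda>n. norm (y n) powr q)"
    by (rule summable_comparison_test'[OF sy, of 0]) (use cmp in simp)
  have "S q y \<le> S p y" unfolding S_def by (intro suminf_le cmp sq sy)
  then show ?thesis using sq Sy by (simp add: lp_iff)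
qed

lemma lp_mono:
  fixes x :: "nat \<Rightarrow> 'a::real_normed_field"
  assumes x: "x \<in> lp p" and p: "p > 0" and pq: "p \<le> q"
  shows "x \<in> lp q \<and> lp_norm q x \<le> lp_norm p x"
proof (cases "lp_norm p x = 0")
  case True
  then have "x = (\<lambda>n. 0)" using lp_norm_eq_0[OF x p] by simp
  then show ?thesis by (simp add: lp_zero lp_norm_zero)
next
  case False
  define r where "r = lp_norm p x"
  have r0: "r > 0" using False lp_norm_nonneg[of p x] by (simp add: r_def)
  define y where "y = (\<lambda>n. of_real (1/r) * x n)"
  have ylp: "y \<in> lp p" unfolding y_def by (rule lp_scale[OF x])
  have "lp_norm p y = norm (of_real (1/r) :: 'a) * lp_norm p x"
    unfolding y_def by (rule lp_norm_scale[OF x p])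
  then have "lp_norm p y = 1" using r0 by (simp add: r_def norm_divide)
  then have "S p y = 1" using lp_norm_pow[OF ylp p] by simp
  then have yq: "y \<in> lp q" and Syq: "S q y \<le> 1" using unit_lp_mono[OF ylp _ p pq] by auto
  have q: "q > 0" using p pq by simp
  have ynq: "lp_norm q y \<le> 1" using S_le_iff[OF yq q, of 1] Syq by simp
  have xe: "x = (\<lambda>n. of_real r * y n)" using r0 by (simp add: y_def)
  have "x \<in> lp q" using lp_scale[OF yq, of "of_real r"] xe by simp
  moreover have "lp_norm q x = r * lp_norm q y"
    using lp_norm_scale[OF yq q, of "of_real r"] xe r0 by simp
  ultimately show ?thesis using ynq r0 by (simp add: r_def)
qed

definition cf :: "nat \<Rightarrow> real" where "cf n = real (Suc n) / real (Suc (Suc n))"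

lemma cf: "0 < cf n" "cf n < 1" by (auto simp: cf_def)

lemma cf_lim: "cf \<longlonglongrightarrow> 1"
proof -
  have "(\<lambda>n. 1 - inverse (real (Suc (Suc n)))) \<longlonglongrightarrow> 1 - 0"
    by (intro tendsto_diff tendsto_const) (rule LIMSEQ_Suc[OF LIMSEQ_inverse_real_of_nat])
  moreover have "cf = (\<lambda>n. 1 - inverse (real (Suc (Suc n))))" by (rule ext) (simp add: cf_def field_simps)
  ultimately show ?thesis by simp
qed

definition Tc :: "(nat \<Rightarrow> 'a::real_normed_field) \<Rightarrow> nat \<Rightarrow> 'a" where
  "Tc x = (\<lambda>n. of_real (cf n) * x n)"

lemma Tc_lp: "x \<in> lp p \<Longrightarrow> p > 0 \<Longrightarrow> Tc x \<in> lp p \<and> S p (Tc x) \<le> S p x"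
proof -
  assume x: "x \<in> lp p" and p: "p > 0"
  have sx: "summable (\<lambda>n. norm (x n) powr p)" using x by (simp add: lp_iff)
  have cmp: "norm (Tc x n) powr p \<le> norm (x n) powr p" for n
  proof -
    have "norm (Tc x n) \<le> norm (x n)" using cf[of n] by (simp add: Tc_def norm_mult mult_left_le_one_le)
    then show ?thesis using p by (intro powr_mono2) auto
  qed
  have st: "summable (\<lambda>n. norm (Tc x n) powr p)"
    by (rule summable_comparison_test'[OF sx, of 0]) (use cmp in simp)
  have "S p (Tc x) \<le> S p x" unfolding S_def by (intro suminf_le cmp st sx)
  then show ?thesis using st by (simp add: lp_iff)
qed

lemma Tc_strict:
  assumes x: "x \<in> lp p" and p: "p > 0" and nz: "x \<noteq> (\<lambda>n. 0)"
  shows "S p (Tc x) < S p x"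
proof -
  have sx: "summable (\<lambda>n. norm (x n) powr p)" using x by (simp add: lp_iff)
  have st: "summable (\<lambda>n. norm (Tc x n) powr p)" using Tc_lp[OF x p] by (simp add: lp_iff)
  have nn: "0 \<le> norm (x n) powr p - norm (Tc x n) powr p" for n
  proof -
    have "norm (Tc x n) \<le> norm (x n)" using cf[of n] by (simp add: Tc_def norm_mult mult_left_le_one_le)
    then show ?thesis using p powr_mono2[of p "norm (Tc x n)" "norm (x n)"] by simp
  qed
  obtain n where n: "x n \<noteq> 0" using nz by auto
  have "norm (Tc x n) < norm (x n)"
    using cf[of n] n by (simp add: Tc_def norm_mult)
  then have pos: "0 < norm (x n) powr p - norm (Tc x n) powr p"
    using p powr_less_mono2[of p "norm (Tc x n)" "norm (x n)"] by simp
  have "0 < (\<Sum>n. norm (x n) powr p - norm (Tc x n) powr p)"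
    using suminf_pos_iff[OF summable_diff[OF sx st] nn] pos by blast
  then show ?thesis unfolding S_def using suminf_diff[OF sx st] by simp
qed

lemma single_lp: "(\<lambda>m. if m = n then (1::'a::real_normed_field) else 0) \<in> lp p \<and>
    lp_norm p (\<lambda>m. if m = n then (1::'a) else 0) = 1"
proof -
  have e: "(\<lambda>m. norm (if m = n then (1::'a) else 0) powr p) = (\<lambda>m. if m = n then 1 else 0)"
    by (rule ext) simp
  have "(\<lambda>m. if m = n then (\<lambda>_. 1::real) m else 0) sums 1" using sums_single[of n "\<lambda>_. 1::real"] by simp
  then show ?thesis by (simp add: lp_iff lp_norm_def e sums_iff)
qed

lemma Tc_single: "Tc (\<lambda>m. if m = n then (1::'a::real_normed_field) else 0) = (\<lambda>m. if m = n then of_real (cf n) else 0)"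
  by (rule ext) (simp add: Tc_def)

lemma single_norm_c: "lp_norm q (\<lambda>m. if m = n then (of_real (cf n) :: 'a::real_normed_field) else 0) = cf n"
  if "q > 0"
proof -
  have "(\<lambda>m. if m = n then (of_real (cf n) :: 'a) else 0) = (\<lambda>m. of_real (cf n) * (if m = n then 1 else 0))"
    by (rule ext) simp
  moreover have s: "(\<lambda>m. if m = n then (1::'a) else 0) \<in> lp q" and s1: "lp_norm q (\<lambda>m. if m = n then (1::'a) else 0) = 1"
    using single_lp by auto
  moreover have "lp_norm q (\<lambda>m. of_real (cf n) * (if m = n then (1::'a) else 0))
     = norm (of_real (cf n)::'a) * lp_norm q (\<lambda>m. if m = n then (1::'a) else 0)"
    by (rule lp_norm_scale[OF s that])
  ultimately show ?thesis using cf[of n] by simp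
qed

lemma part2:
  assumes p1: "1 < p" and pq: "p \<le> q"
  shows "\<not> sBPBp TYPE('a::real_normed_field) p q"
proof -
  have p: "p > 0" and q: "q > 0" using p1 pq by auto
  let ?T = "Tc :: (nat \<Rightarrow> 'a) \<Rightarrow> nat \<Rightarrow> 'a"
  have Tq: "?T x \<in> lp q \<and> lp_norm q (?T x) \<le> lp_norm p x" if x: "x \<in> lp p" for x
  proof -
    have t: "?T x \<in> lp p" and St: "S p (?T x) \<le> S p x" using Tc_lp[OF x p] by auto
    have "lp_norm p (?T x) \<le> lp_norm p x"
      unfolding lp_norm_S using St S_nonneg[OF t] p by (intro powr_mono2) auto
    then show ?thesis using lp_mono[OF t p pq] by auto
  qed
  have bo: "bounded_op p q ?T"
    unfolding bounded_op_def
  proof (intro conjI ballI allI)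
    show "\<And>x. x \<in> lp p \<Longrightarrow> ?T x \<in> lp q" using Tq by blast
    show "\<And>x y. ?T (\<lambda>n. x n + y n) = (\<lambda>n. ?T x n + ?T y n)" by (simp add: Tc_def fun_eq_iff algebra_simps)
    show "\<And>c x. ?T (\<lambda>n. c * x n) = (\<lambda>n. c * ?T x n)" by (simp add: Tc_def fun_eq_iff algebra_simps)
    show "\<exists>C. \<forall>x\<in>lp p. lp_norm q (?T x) \<le> C * lp_norm p x" using Tq by (intro exI[of _ 1]) auto
  qed
  have lt1: "lp_norm q (?T x) < 1" if x: "x \<in> lp p" and xn: "lp_norm p x = 1" for x
  proof -
    have nz: "x \<noteq> (\<lambda>n. 0)"
    proof
      assume "x = (\<lambda>n. 0)" then have "lp_norm p x = 0" by (simp add: lp_norm_zero)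
      then show False using xn by simp
    qed
    have t: "?T x \<in> lp p" using Tc_lp[OF x p] by auto
    have "S p (?T x) < S p x" by (rule Tc_strict[OF x p nz])
    then have "lp_norm p (?T x) < lp_norm p x"
      unfolding lp_norm_S using S_nonneg[OF t] p by (intro powr_less_mono2) auto
    then show ?thesis using lp_mono[OF t p pq] xn by linarith
  qed
  define A where "A = {lp_norm q (?T x) | x. x \<in> lp p \<and> lp_norm p x = 1}"
  have cA: "cf n \<in> A" for n
    unfolding A_def using single_lp[of n p, where 'a='a] Tc_single[of n, where 'a='a] single_norm_c[OF q, of n, where 'a='a]
    by (intro CollectI exI[of _ "\<lambda>m. if m = n then (1::'a) else 0"]) auto
  have on: "op_norm p q ?T = 1"
    unfolding op_norm_def A_def[symmetric]
  proof (rule cSup_eq_non_empty)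
    show "A \<noteq> {}" using cA by blast
    show "\<And>x. x \<in> A \<Longrightarrow> x \<le> 1" unfolding A_def using lt1 by fastforce
    show "\<And>y. (\<And>x. x \<in> A \<Longrightarrow> x \<le> y) \<Longrightarrow> 1 \<le> y"
    proof -
      fix y assume "\<And>x. x \<in> A \<Longrightarrow> x \<le> y"
      then have "cf n \<le> y" for n using cA by blast
      then show "1 \<le> y" by (intro LIMSEQ_le_const2[OF cf_lim]) auto
    qed
  qed
  show ?thesis
    unfolding sBPBp_def
  proof
    assume H: "\<forall>\<epsilon>>0. \<forall>T :: (nat \<Rightarrow> 'a) \<Rightarrow> (nat \<Rightarrow> 'a).
        bounded_op p q T \<and> op_norm p q T = 1 \<longrightarrow>
        (\<exists>\<eta>>0. \<forall>x0\<in>lp p. lp_norm p x0 = 1 \<and> lp_norm q (T x0) > 1 - \<eta> \<longrightarrow>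
           (\<exists>x1\<in>lp p. lp_norm p x1 = 1 \<and> lp_norm q (T x1) = 1 \<and>
              lp_norm p (\<lambda>n. x1 n - x0 n) < \<epsilon>))"
    obtain \<eta> where \<eta>: "\<eta> > 0" and P: "\<forall>x0\<in>lp p. lp_norm p x0 = 1 \<and> lp_norm q (?T x0) > 1 - \<eta> \<longrightarrow>
           (\<exists>x1\<in>lp p. lp_norm p x1 = 1 \<and> lp_norm q (?T x1) = 1 \<and> lp_norm p (\<lambda>n. x1 n - x0 n) < 1)"
      using H[rule_format, of 1 ?T] bo on by auto
    have "eventually (\<lambda>n. cf n > 1 - \<eta>) sequentially"
      using cf_lim \<eta> by (intro order_tendstoD(1)) auto
    then obtain n where n: "cf n > 1 - \<eta>" by (auto simp: eventually_sequentially)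
    have "lp_norm q (?T (\<lambda>m. if m = n then (1::'a) else 0)) > 1 - \<eta>"
      using n Tc_single[of n, where 'a='a] single_norm_c[OF q, of n, where 'a='a] by simp
    then obtain x1 where "x1 \<in> lp p" "lp_norm p x1 = 1" "lp_norm q (?T x1) = 1"
      using P single_lp[of n p, where 'a='a] by blast
    then show False using lt1 by fastforce
  qed
qed


lemma sBPBp_part1:
  assumes "1 \<le> q" "q < p"
  shows "sBPBp TYPE('a::{real_normed_field,heine_borel}) p q"
  unfolding sBPBp_def
proof (intro allI impI)
  fix \<epsilon> :: real and T :: "(nat \<Rightarrow> 'a) \<Rightarrow> (nat \<Rightarrow> 'a)"
  assume "\<epsilon> > 0" "bounded_op p q T \<and> op_norm p q T = 1"
  then show "\<exists>\<eta>>0. \<forall>x0\<in>lp p. lp_norm p x0 = 1 \<and> lp_norm q (T x0) > 1 - \<eta> \<longrightarrow>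
           (\<exists>x1\<in>lp p. lp_norm p x1 = 1 \<and> lp_norm q (T x1) = 1 \<and> lp_norm p (\<lambda>n. x1 n - x0 n) < \<epsilon>)"
    using part1[of q p T \<epsilon>] assms by auto
qed

theorem mainTheorem20:
  shows "(\<forall>p q. 1 \<le> q \<and> q < p \<longrightarrow>
            sBPBp TYPE(real) p q \<and> sBPBp TYPE(complex) p q) \<and>
         (\<forall>p q. 1 < p \<and> p \<le> q \<longrightarrow>
            \<not> sBPBp TYPE(real) p q \<and> \<not> sBPBp TYPE(complex) p q)"
  using sBPBp_part1[where 'a=real] sBPBp_part1[where 'a=complex] part2[where 'a=real] part2[where 'a=complex]
  by blast

end
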